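(* For any integer $g\ge 0$, \[\sum_{S\in\mathcal{B}(g)}e_2(S)\le 2F_{g+1},\] where $F_n$ denotes the $n$-th Fibonacci number ($F_1=F_2=1$, $F_{n+2}=F_{n+1}+F_n$).
   Context: A numerical semigroup $S$ is a submonoid of $\mathbb{N}_0$ with finite complement; its genus is the size of the complement, $m(S)$ is its smallest nonzero element, $F(S)$ is the largest element of the complement (Frobenius number), and $e(S)$ is the size of its minimal generating set $(S\setminus\{0\})\setminus((S\setminus\{0\})+(S\setminus\{0\}))$. Define $e_1(S)=\#([m(S),2m(S)-1]\cap S)$ and $e_2(S)=e(S)-e_1(S)$. $\mathcal{B}(g)$ is the set of numerical semigroups $S$ of genus $g$ with $F(S)<2m(S)$. *)

theory Defs
  imports Main "HOL-Number_Theory.Fib"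
begin

definition numerical_semigroup :: "nat set \<Rightarrow> bool" where
  "numerical_semigroup S \<longleftrightarrow> 0 \<in> S \<and> (\<forall>a\<in>S. \<forall>b\<in>S. a + b \<in> S) \<and> finite (UNIV - S)"

definition genus :: "nat set \<Rightarrow> nat" where
  "genus S = card (UNIV - S)"

definition multiplicity_ns :: "nat set \<Rightarrow> nat" where
  "multiplicity_ns S = (LEAST x. x \<in> S \<and> 0 < x)"

definition frobenius :: "nat set \<Rightarrow> int" where
  "frobenius S = (if UNIV - S = {} then -1 else int (Max (UNIV - S)))"

definition min_generators :: "nat set \<Rightarrow> nat set" where
  "min_generators S = (S - {0}) - {a + b | a b. a \<in> S - {0} \<and> b \<in> S - {0}}"

definition embdim :: "nat set \<Rightarrow> nat" where
  "embdim S = card (min_generators S)"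

definition e1 :: "nat set \<Rightarrow> nat" where
  "e1 S = card ({multiplicity_ns S .. 2 * multiplicity_ns S - 1} \<inter> S)"

definition e2 :: "nat set \<Rightarrow> int" where
  "e2 S = int (embdim S) - int (e1 S)"

definition B_set :: "nat \<Rightarrow> nat set set" where
  "B_set g = {S. numerical_semigroup S \<and> genus S = g \<and> frobenius S < 2 * int (multiplicity_ns S)}"

end

theory Submission
  imports Defs
begin

definition Fam :: "nat \<Rightarrow> (nat \<times> nat set) set" where
  "Fam g = {(m, A). 1 \<le> m \<and> A \<subseteq> {1..<m} \<and> card A + g + 2 = 2*m}"

definition JJ :: "nat \<Rightarrow> nat set \<Rightarrow> nat set" where
  "JJ m A = {j \<in> {1..<m}. j \<notin> A \<and> (\<forall>a\<in>A. a < j \<longrightarrow> j - a \<notin> A)}"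

definition ew :: "nat \<times> nat set \<Rightarrow> nat" where
  "ew p = card (JJ (fst p) (snd p))"

definition condp :: "nat \<Rightarrow> nat set \<Rightarrow> bool" where
  "condp m A \<longleftrightarrow> (\<forall>a\<in>A. m - a \<notin> A)"

definition QQ :: "nat \<Rightarrow> (nat \<times> nat set) set" where
  "QQ g = {p \<in> Fam g. condp (fst p) (snd p)}"

definition SF :: "nat \<Rightarrow> nat" where
  "SF g = (\<Sum>p\<in>Fam g. ew p)"

lemma Fam_sub: "Fam g \<subseteq> {1..g+2} \<times> Pow {1..<g+2}"
proof
  fix p assume "p \<in> Fam g"
  then obtain m A where p: "p = (m, A)" "1 \<le> m" "A \<subseteq> {1..<m}" "card A + g + 2 = 2*m"
    unfolding Fam_def by auto
  have "card A \<le> card {1..<m}" using p(3) by (intro card_mono) auto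
  then have "card A \<le> m - 1" by simp
  then have "m \<le> g + 1" using p by linarith
  then show "p \<in> {1..g+2} \<times> Pow {1..<g+2}" using p by auto
qed

lemma finite_Fam: "finite (Fam g)"
  by (rule finite_subset[OF Fam_sub]) auto

lemma finite_QQ: "finite (QQ g)"
  unfolding QQ_def using finite_Fam by auto

lemma Fam_split:
  "Fam (Suc (Suc g)) \<subseteq> (\<lambda>(m,A). (m+1, insert m A)) ` Fam (Suc g) \<union> (\<lambda>(m,A). (m+1, A)) ` Fam g"
proof
  fix p assume "p \<in> Fam (Suc (Suc g))"
  then obtain m A where p: "p = (m, A)" "1 \<le> m" "A \<subseteq> {1..<m}" "card A + g + 4 = 2*m"
    unfolding Fam_def by auto
  have fA: "finite A" using p(3) finite_subset by blast
  have "m \<noteq> 1" using p by auto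
  then obtain k where k: "m = k + 1" "1 \<le> k" using p(2) by (metis add.commute le_add1 less_one nat_neq_iff plus_1_eq_Suc Suc_le_eq not_less_eq_eq le_neq_implies_less linorder_not_le Suc_eq_plus1 le_Suc_ex)
  show "p \<in> (\<lambda>(m,A). (m+1, insert m A)) ` Fam (Suc g) \<union> (\<lambda>(m,A). (m+1, A)) ` Fam g"
  proof (cases "k \<in> A")
    case True
    let ?A = "A - {k}"
    have "?A \<subseteq> {1..<k}" using p(3) k by auto
    moreover have "card ?A + 1 = card A" using True fA
      by (metis card_Diff1_less_iff card_Suc_Diff1 Suc_eq_plus1)
    ultimately have "(k, ?A) \<in> Fam (Suc g)" using p k unfolding Fam_def by auto
    moreover have "p = (k+1, insert k ?A)" using p k True by auto
    ultimately show ?thesis by force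
  next
    case False
    have "A \<subseteq> {1..<k}"
    proof
      fix x assume "x \<in> A"
      then have "x \<in> {1..<k+1}" using p(3) k by auto
      then show "x \<in> {1..<k}" using False \<open>x \<in> A\<close> by (cases "x = k") auto
    qed
    then have "(k, A) \<in> Fam g" using p k unfolding Fam_def by auto
    moreover have "p = (k+1, A)" using p k by auto
    ultimately show ?thesis by force
  qed
qed

lemma JJ_ins: "A \<subseteq> {1..<m} \<Longrightarrow> JJ (Suc m) (insert m A) = JJ m A"
  unfolding JJ_def by auto

lemma JJ_noins: "A \<subseteq> {1..<m} \<Longrightarrow> JJ (m+1) A \<subseteq> JJ m A \<union> (if condp m A then {m} else {})"
proof
  fix x assume a: "A \<subseteq> {1..<m}" and x: "x \<in> JJ (m+1) A"
  show "x \<in> JJ m A \<union> (if condp m A then {m} else {})"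
  proof (cases "x = m")
    case True
    have "condp m A" unfolding condp_def
    proof
      fix b assume "b \<in> A"
      then have "b < m" using a by auto
      then show "m - b \<notin> A" using x True \<open>b \<in> A\<close> unfolding JJ_def by auto
    qed
    then show ?thesis using True by auto
  next
    case False
    then show ?thesis using x unfolding JJ_def by auto
  qed
qed

lemma finite_JJ: "finite (JJ m A)" unfolding JJ_def by auto

lemma ew_noins: "A \<subseteq> {1..<m} \<Longrightarrow> ew (Suc m, A) \<le> ew (m, A) + (if condp m A then 1 else 0)"
proof -
  assume a: "A \<subseteq> {1..<m}"
  have "ew (Suc m, A) \<le> card (JJ m A \<union> (if condp m A then {m} else {}))"
    unfolding ew_def using JJ_noins[OF a] by (intro card_mono) (auto simp: finite_JJ)
  also have "\<dots> \<le> card (JJ m A) + card (if condp m A then {m} else {} :: nat set)"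
    by (rule card_Un_le)
  finally show ?thesis unfolding ew_def by (cases "condp m A") simp_all
qed

lemma SF_rec: "SF (Suc (Suc g)) \<le> SF (Suc g) + SF g + card (QQ g)"
proof -
  let ?f1 = "\<lambda>(m,A). (m+1, insert m A)" and ?f2 = "\<lambda>(m::nat,A::nat set). (m+1, A)"
  have "SF (Suc (Suc g)) \<le> sum ew (?f1 ` Fam (Suc g) \<union> ?f2 ` Fam g)"
    unfolding SF_def by (rule sum_mono2) (use Fam_split finite_Fam in auto)
  also have "\<dots> \<le> sum ew (?f1 ` Fam (Suc g)) + sum ew (?f2 ` Fam g)"
    by (simp add: sum_Un_nat finite_Fam)
  also have "sum ew (?f1 ` Fam (Suc g)) \<le> sum (ew \<circ> ?f1) (Fam (Suc g))"
    by (rule sum_image_le) (auto simp: finite_Fam)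
  also have "sum (ew \<circ> ?f1) (Fam (Suc g)) = SF (Suc g)"
    unfolding SF_def by (rule sum.cong) (auto simp: Fam_def ew_def JJ_ins)
  also have "sum ew (?f2 ` Fam g) \<le> sum (ew \<circ> ?f2) (Fam g)"
    by (rule sum_image_le) (auto simp: finite_Fam)
  also have "\<dots> \<le> (\<Sum>p\<in>Fam g. ew p + (if condp (fst p) (snd p) then 1 else 0))"
  proof (rule sum_mono)
    fix p assume "p \<in> Fam g"
    then show "(ew \<circ> ?f2) p \<le> ew p + (if condp (fst p) (snd p) then 1 else 0)"
      using ew_noins[of "snd p" "fst p"] by (cases p) (auto simp: Fam_def)
  qed
  also have "\<dots> = SF g + card (QQ g)"
    unfolding SF_def QQ_def sum.distrib
    by (simp add: sum.If_cases finite_Fam Int_def)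
  finally show ?thesis by simp
qed


fun hh :: "nat \<Rightarrow> nat" where
  "hh 0 = 1" | "hh (Suc 0) = 0" | "hh (Suc (Suc 0)) = 1" | "hh (Suc (Suc (Suc 0))) = 2"
| "hh (Suc (Suc (Suc (Suc n)))) = hh n + 2 * hh (Suc n)"

lemma hh_unf: "hh g = (if g = 0 then 1 else 0) + (if g = 2 then 1 else 0)
   + (if 4 \<le> g then hh (g - 4) else 0) + (if 3 \<le> g then 2 * hh (g - 3) else 0)"
  by (induction g rule: hh.induct) simp_all

definition sh :: "nat set \<Rightarrow> nat set" where "sh A = (\<lambda>x. x + 1) ` A"

definition P1 :: "nat \<times> nat set \<Rightarrow> nat \<times> nat set" where "P1 p = (fst p + 2, sh (snd p))"
definition P2 :: "nat \<times> nat set \<Rightarrow> nat \<times> nat set" where "P2 p = (fst p + 2, insert 1 (sh (snd p)))"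
definition P3 :: "nat \<times> nat set \<Rightarrow> nat \<times> nat set" where "P3 p = (fst p + 2, insert (fst p + 1) (sh (snd p)))"

definition Bs :: "nat \<Rightarrow> (nat \<times> nat set) set" where
  "Bs g = (if g = 0 then {(1,{})} else {}) \<union> (if g = 2 then {(2,{})} else {})"

lemma QQ_split: "QQ g \<subseteq> Bs g \<union> (if 4 \<le> g then P1 ` QQ (g - 4) else {})
   \<union> (if 3 \<le> g then P2 ` QQ (g - 3) \<union> P3 ` QQ (g - 3) else {})"
proof
  fix p assume "p \<in> QQ g"
  then obtain m A where p: "p = (m, A)" "1 \<le> m" "A \<subseteq> {1..<m}" "card A + g + 2 = 2*m"
     and c: "\<forall>a\<in>A. m - a \<notin> A"
    unfolding QQ_def Fam_def condp_def by auto
  have fA: "finite A" using p(3) finite_subset by blast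
  show "p \<in> Bs g \<union> (if 4 \<le> g then P1 ` QQ (g - 4) else {})
   \<union> (if 3 \<le> g then P2 ` QQ (g - 3) \<union> P3 ` QQ (g - 3) else {})"
  proof (cases "m \<le> 2")
    case True
    show ?thesis
    proof (cases "m = 1")
      case True
      then have "A = {}" using p by auto
      then show ?thesis using p True by (auto simp: Bs_def)
    next
      case False
      then have m2: "m = 2" using True p by auto
      then have "A \<subseteq> {1}" using p by auto
      moreover have "1 \<notin> A" using c m2 by auto
      ultimately have "A = {}" by auto
      then show ?thesis using p m2 by (auto simp: Bs_def)
    qed
  next
    case False
    define k where "k = m - 2"
    have mk: "m = k + 2" "1 \<le> k" using False k_def by auto
    define B where "B = (\<lambda>x. x - 1) ` (A - {1, m - 1})"
    have injm: "inj_on (\<lambda>x. x - 1) (A - {1, m - 1})"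
      using p(3) by (intro inj_onI) auto
    have cB: "card B = card (A - {1, m - 1})" unfolding B_def using injm by (simp add: card_image)
    have Bsub: "B \<subseteq> {1..<k}" unfolding B_def
    proof
      fix y assume "y \<in> (\<lambda>x. x-1) ` (A - {1,m-1})"
      then obtain x where x: "x \<in> A" "x \<noteq> 1" "x \<noteq> m-1" "y = x-1" by auto
      moreover have "x \<in> {1..<m}" using p(3) x(1) by auto
      ultimately show "y \<in> {1..<k}" using mk by auto
    qed
    have "card B \<le> card {1..<k}" using Bsub by (intro card_mono) auto
    then have cBle: "card B + 1 \<le> k" using mk by simp
    have shB: "sh B = A - {1, m - 1}" unfolding B_def sh_def image_image
    proof -
      have "\<And>x. x \<in> A - {1, m - 1} \<Longrightarrow> x - 1 + 1 = x" using p(3) by auto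
      then have "(\<lambda>x. x - 1 + 1) ` (A - {1, m - 1}) = (\<lambda>x. x) ` (A - {1, m - 1})"
        by (intro image_cong) auto
      then show "(\<lambda>x. x - 1 + 1) ` (A - {1, m - 1}) = A - {1, m - 1}" by simp
    qed
    have cB2: "condp k B" unfolding condp_def
    proof
      fix b assume b: "b \<in> B"
      show "k - b \<notin> B"
      proof
        assume kb: "k - b \<in> B"
        obtain x where x: "x \<in> A - {1, m - 1}" "b = x - 1" using b unfolding B_def by auto
        obtain y where y: "y \<in> A - {1, m - 1}" "k - b = y - 1" using kb unfolding B_def by auto
        have "x \<ge> 2" "y \<ge> 2" "x < m" "y < m" using x y p(3) by auto
        then have "y = m - x" using x y mk by auto
        then show False using c x y by auto
      qed
    qed
    have n1: "\<not> (1 \<in> A \<and> m - 1 \<in> A)" using c mk by force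
    have ne: "1 \<noteq> m - 1" using mk by auto
    show ?thesis
    proof (cases "1 \<in> A")
      case True
      then have "m - 1 \<notin> A" using n1 by auto
      then have A: "A = insert 1 (sh B)" using True shB by auto
      have "card A = card B + 1"
      proof -
        have "A - {1, m - 1} = A - {1}" using \<open>m - 1 \<notin> A\<close> by auto
        moreover have "card (A - {1}) = card A - 1" by (rule card_Diff_singleton[OF True])
        ultimately have "card B = card A - 1" using cB by simp
        moreover have "card A > 0" using True fA by (auto simp: card_gt_0_iff)
        ultimately show ?thesis by linarith
      qed
      then have g3: "3 \<le> g" "card B + (g - 3) + 2 = 2 * k" using p(4) mk cBle by auto
      have "(k, B) \<in> QQ (g - 3)" using g3 Bsub cB2 mk unfolding QQ_def Fam_def by auto
      moreover have "p = P2 (k, B)" using p A mk unfolding P2_def by auto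
      ultimately show ?thesis using g3 by auto
    next
      case False
      show ?thesis
      proof (cases "m - 1 \<in> A")
        case True
        then have A: "A = insert (k + 1) (sh B)" using False shB mk by auto
        have "card A = card B + 1"
        proof -
          have "A - {1, m - 1} = A - {m - 1}" using False by auto
          moreover have "card (A - {m - 1}) = card A - 1" by (rule card_Diff_singleton[OF True])
        ultimately have "card B = card A - 1" using cB by simp
          moreover have "card A > 0" using True fA by (auto simp: card_gt_0_iff)
          ultimately show ?thesis by linarith
        qed
        then have g3: "3 \<le> g" "card B + (g - 3) + 2 = 2 * k" using p(4) mk cBle by auto
        have "(k, B) \<in> QQ (g - 3)" using g3 Bsub cB2 mk unfolding QQ_def Fam_def by auto
        moreover have "p = P3 (k, B)" using p A mk unfolding P3_def by auto
        ultimately show ?thesis using g3 by auto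
      next
        case F2: False
        then have A: "A = sh B" using False shB by auto
        have "card A = card B" using cB F2 False by auto
        then have g4: "4 \<le> g" "card B + (g - 4) + 2 = 2 * k" using p(4) mk cBle by auto
        have "(k, B) \<in> QQ (g - 4)" using g4 Bsub cB2 mk unfolding QQ_def Fam_def by auto
        moreover have "p = P1 (k, B)" using p A mk unfolding P1_def by auto
        ultimately show ?thesis using g4 by auto
      qed
    qed
  qed
qed

lemma QQ_bound: "card (QQ g) \<le> hh g"
proof (induction g rule: less_induct)
  case (less g)
  let ?X = "Bs g \<union> (if 4 \<le> g then P1 ` QQ (g - 4) else {})"
  let ?Y = "(if 3 \<le> g then P2 ` QQ (g - 3) \<union> P3 ` QQ (g - 3) else {})"
  have fin: "finite (Bs g)" unfolding Bs_def by auto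
  have "card (QQ g) \<le> card (?X \<union> ?Y)"
    by (rule card_mono) (use QQ_split fin finite_QQ in auto)
  also have "\<dots> \<le> card ?X + card ?Y" by (rule card_Un_le)
  also have "card ?X \<le> card (Bs g) + card (if 4 \<le> g then P1 ` QQ (g - 4) else {})" by (rule card_Un_le)
  also have "card (if 4 \<le> g then P1 ` QQ (g - 4) else {}) \<le> (if 4 \<le> g then hh (g - 4) else 0)"
  proof (cases "4 \<le> g")
    case True
    have "card (P1 ` QQ (g - 4)) \<le> card (QQ (g - 4))" by (rule card_image_le[OF finite_QQ])
    also have "\<dots> \<le> hh (g - 4)" using less True by auto
    finally show ?thesis using True by simp
  qed simp
  also have "card ?Y \<le> (if 3 \<le> g then 2 * hh (g - 3) else 0)"
  proof (cases "3 \<le> g")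
    case True
    have "card (P2 ` QQ (g - 3) \<union> P3 ` QQ (g - 3)) \<le> card (P2 ` QQ (g - 3)) + card (P3 ` QQ (g - 3))"
      by (rule card_Un_le)
    also have "\<dots> \<le> card (QQ (g - 3)) + card (QQ (g - 3))"
      by (intro add_mono card_image_le finite_QQ)
    also have "\<dots> \<le> 2 * hh (g - 3)" using less[of "g - 3"] True by auto
    finally show ?thesis using True by simp
  qed simp
  also have "card (Bs g) = (if g = 0 then 1 else 0) + (if g = 2 then 1 else 0)"
    unfolding Bs_def by auto
  finally show ?case by (subst hh_unf) linarith
qed

fun GG :: "nat \<Rightarrow> nat" where
  "GG 0 = 0" | "GG (Suc 0) = 0" | "GG (Suc (Suc n)) = GG (Suc n) + GG n + hh n"

lemma ew_le: "p \<in> Fam g \<Longrightarrow> ew p + fst p \<le> g + 1"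
proof -
  assume "p \<in> Fam g"
  then obtain m A where p: "p = (m, A)" "1 \<le> m" "A \<subseteq> {1..<m}" "card A + g + 2 = 2*m"
    unfolding Fam_def by auto
  have fA: "finite A" using p(3) finite_subset by blast
  have "JJ m A \<subseteq> {1..<m} - A" unfolding JJ_def by auto
  then have "card (JJ m A) \<le> card ({1..<m} - A)" by (intro card_mono) auto
  also have "\<dots> = (m - 1) - card A" using p(3) by (simp add: card_Diff_subset fA)
  moreover have "card A \<le> card {1..<m}" using p(3) by (intro card_mono) auto
  ultimately show ?thesis using p unfolding ew_def by auto
qed

lemma SF_0: "SF 0 = 0"
  unfolding SF_def
proof (rule sum.neutral, rule ballI)
  fix p assume a: "p \<in> Fam 0"
  then have "fst p \<ge> 1" unfolding Fam_def by auto
  then show "ew p = 0" using ew_le[OF a] by auto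
qed

lemma SF_1: "SF 1 = 0"
  unfolding SF_def
proof (rule sum.neutral, rule ballI)
  fix p assume a: "p \<in> Fam 1"
  then have "fst p \<ge> 2" unfolding Fam_def by auto
  then show "ew p = 0" using ew_le[OF a] by auto
qed

lemma SF_GG: "SF g \<le> GG g"
proof (induction g rule: GG.induct)
  case 1 then show ?case by (simp add: SF_0)
next
  case 2 then show ?case using SF_1 by simp
next
  case (3 n)
  then show ?case using SF_rec[of n] QQ_bound[of n] by simp
qed

definition TT :: "nat \<Rightarrow> nat" where "TT g = 2 * hh g + hh (g+1) + hh (g+2)"

lemma GG_big: "GG (n+8) + TT (n+8) \<le> 2 * fib (n+9) \<and> GG (n+9) + TT (n+9) \<le> 2 * fib (n+10)"
proof (induction n)
  case 0
  then show ?case by (simp add: TT_def eval_nat_numeral)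
next
  case (Suc n)
  have r: "hh (n + 12) = hh (n+8) + 2 * hh (n + 9)"
    using hh.simps(5)[of "n+8"] by (simp add: eval_nat_numeral)
  have "GG (n+10) = GG (n+9) + GG (n+8) + hh (n+8)"
    using GG.simps(3)[of "n+8"] by (simp add: eval_nat_numeral)
  moreover have "fib (n+11) = fib (n+10) + fib (n+9)"
    using fib.simps(3)[of "n+9"] by (simp add: eval_nat_numeral)
  ultimately show ?case using Suc r unfolding TT_def by (simp add: eval_nat_numeral)
qed

lemma GG_bound: "GG g \<le> 2 * fib (g + 1)"
proof (cases "g < 8")
  case True
  then have "g \<in> {0,1,2,3,4,5,6,7}" by auto
  then show ?thesis by (auto simp: eval_nat_numeral)
next
  case False
  then obtain n where "g = n + 8" by (metis add.commute le_Suc_ex not_less)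
  then have "g + 1 = n + 9" by simp
  moreover have "GG (n+8) \<le> 2 * fib (n+9)" using GG_big[of n] by linarith
  ultimately show ?thesis using \<open>g = n + 8\<close> by metis
qed

lemma SF_bound: "SF g \<le> 2 * fib (g + 1)"
  using SF_GG GG_bound le_trans by blast


definition psi :: "nat set \<Rightarrow> nat \<times> nat set" where
  "psi S = (multiplicity_ns S, {a \<in> {1..<multiplicity_ns S}. multiplicity_ns S + a \<in> S})"

lemma ns_pos: assumes "numerical_semigroup S" shows "\<exists>x. x \<in> S \<and> 0 < x"
proof -
  have "finite (UNIV - S)" using assms unfolding numerical_semigroup_def by auto
  then obtain n where n: "\<forall>x\<in>UNIV - S. x < n" using finite_nat_set_iff_bounded by blast
  have "n + 1 \<in> S"
  proof (rule ccontr)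
    assume "n + 1 \<notin> S"
    then have "n + 1 \<in> UNIV - S" by auto
    with n show False by (meson add_lessD1 less_irrefl_nat)
  qed
  then show ?thesis by auto
qed

lemma mult_props: assumes "numerical_semigroup S"
  shows "multiplicity_ns S \<in> S" "0 < multiplicity_ns S"
    "\<And>x. 0 < x \<Longrightarrow> x < multiplicity_ns S \<Longrightarrow> x \<notin> S"
proof -
  obtain x where "x \<in> S \<and> 0 < x" using ns_pos[OF assms] by blast
  then have "multiplicity_ns S \<in> S \<and> 0 < multiplicity_ns S"
    unfolding multiplicity_ns_def by (rule LeastI)
  then show "multiplicity_ns S \<in> S" "0 < multiplicity_ns S" by auto
  fix y assume "0 < y" "y < multiplicity_ns S"
  then show "y \<notin> S" unfolding multiplicity_ns_def using not_less_Least by blast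
qed

lemma big_in: assumes "S \<in> B_set g" "2 * multiplicity_ns S \<le> x" shows "x \<in> S"
proof (rule ccontr)
  assume "x \<notin> S"
  have fin: "finite (UNIV - S)" using assms(1) unfolding B_set_def numerical_semigroup_def by auto
  have ne: "UNIV - S \<noteq> {}" using \<open>x \<notin> S\<close> by auto
  have "x \<le> Max (UNIV - S)" using \<open>x \<notin> S\<close> fin by (intro Max_ge) auto
  then have "int x \<le> frobenius S" unfolding frobenius_def using ne by auto
  moreover have "frobenius S < 2 * int (multiplicity_ns S)" using assms(1) unfolding B_set_def by auto
  ultimately show False using assms(2) by linarith
qed

lemma charS: assumes "S \<in> B_set g"
  shows "x \<in> S \<longleftrightarrow> (x = 0 \<or> x = fst (psi S) \<or> (fst (psi S) < x \<and> x < 2 * fst (psi S) \<and> x - fst (psi S) \<in> snd (psi S)) \<or> 2 * fst (psi S) \<le> x)"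
proof -
  have ns: "numerical_semigroup S" using assms unfolding B_set_def by auto
  note mp = mult_props[OF ns]
  let ?m = "multiplicity_ns S"
  have z: "0 \<in> S" using ns unfolding numerical_semigroup_def by auto
  show ?thesis
  proof (cases "x = 0 \<or> x = ?m \<or> 2 * ?m \<le> x")
    case True
    then show ?thesis using z mp big_in[OF assms] unfolding psi_def by auto
  next
    case False
    then show ?thesis
    proof (cases "x < ?m")
      case True
      then show ?thesis using mp(3)[of x] False unfolding psi_def by auto
    next
      case F2: False
      then have "?m < x" "x < 2 * ?m" "x \<noteq> 0" using False by auto
      moreover have "?m + (x - ?m) = x" using F2 by auto
      ultimately show ?thesis unfolding psi_def by auto
    qed
  qed
qed

lemma psi_inj: "inj_on psi (B_set g)"
proof (rule inj_onI)
  fix S T assume S: "S \<in> B_set g" and T: "T \<in> B_set g" and e: "psi S = psi T"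
  show "S = T"
  proof
    show "S \<subseteq> T" using charS[OF S] charS[OF T] e by auto
    show "T \<subseteq> S" using charS[OF S] charS[OF T] e by auto
  qed
qed

lemma psi_Fam: assumes "S \<in> B_set g" shows "psi S \<in> Fam g"
proof -
  have ns: "numerical_semigroup S" using assms unfolding B_set_def by auto
  note mp = mult_props[OF ns]
  define m where "m = multiplicity_ns S"
  define A where "A = {a \<in> {1..<m}. m + a \<in> S}"
  have ps: "psi S = (m, A)" unfolding psi_def m_def A_def by simp
  have Asub: "A \<subseteq> {1..<m}" unfolding A_def by auto
  have fA: "finite A" using Asub finite_subset by blast
  have gap: "UNIV - S = {1..<m} \<union> (\<lambda>a. m + a) ` ({1..<m} - A)"
  proof (rule set_eqI)
    fix x
    show "x \<in> UNIV - S \<longleftrightarrow> x \<in> {1..<m} \<union> (\<lambda>a. m + a) ` ({1..<m} - A)"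
      using charS[OF assms, of x] unfolding ps
    proof -
      assume c: "x \<in> S \<longleftrightarrow> (x = 0 \<or> x = fst (m, A) \<or> (fst (m, A) < x \<and> x < 2 * fst (m, A) \<and> x - fst (m, A) \<in> snd (m, A)) \<or> 2 * fst (m, A) \<le> x)"
      show ?thesis
      proof (cases "m < x \<and> x < 2 * m")
        case True
        have "x \<in> (\<lambda>a. m + a) ` ({1..<m} - A) \<longleftrightarrow> x - m \<in> {1..<m} - A"
          using True by (auto simp: image_iff intro: bexI[of _ "x - m"])
        then show ?thesis using c True by auto
      next
        case False
        then show ?thesis using c by auto
      qed
    qed
  qed
  have "card (UNIV - S) = card {1..<m} + card ((\<lambda>a. m + a) ` ({1..<m} - A))"
    unfolding gap by (rule card_Un_disjoint) auto
  also have "card ((\<lambda>a. m + a) ` ({1..<m} - A)) = card ({1..<m} - A)"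
    by (rule card_image) (auto simp: inj_on_def)
  also have "card ({1..<m} - A) = (m - 1) - card A"
    using Asub fA by (simp add: card_Diff_subset)
  finally have gc: "genus S = (m - 1) + ((m - 1) - card A)" unfolding genus_def by simp
  have "card A \<le> card {1..<m}" using Asub by (intro card_mono) auto
  then have "card A \<le> m - 1" by simp
  moreover have "genus S = g" using assms unfolding B_set_def by auto
  moreover have "1 \<le> m" using mp unfolding m_def by auto
  ultimately have "card A + g + 2 = 2 * m" using gc by linarith
  then show ?thesis unfolding ps Fam_def using Asub \<open>1 \<le> m\<close> by auto
qed

lemma e2_le: assumes "S \<in> B_set g" shows "e2 S \<le> int (ew (psi S))"
proof -
  have ns: "numerical_semigroup S" using assms unfolding B_set_def by auto
  note mp = mult_props[OF ns]
  define m where "m = multiplicity_ns S"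
  define A where "A = {a \<in> {1..<m}. m + a \<in> S}"
  have ps: "psi S = (m, A)" unfolding psi_def m_def A_def by simp
  have m0: "0 < m" "m \<in> S" using mp unfolding m_def by auto
  have sub: "min_generators S \<subseteq> ({m .. 2*m-1} \<inter> S) \<union> (\<lambda>j. 2*m + j) ` JJ m A"
  proof
    fix x assume x: "x \<in> min_generators S"
    then have xS: "x \<in> S" "x \<noteq> 0" unfolding min_generators_def by auto
    have ns2: "x \<noteq> a + b" if "a \<in> S" "a \<noteq> 0" "b \<in> S" "b \<noteq> 0" for a b
    proof
      assume "x = a + b"
      then have "x \<in> {a + b | a b. a \<in> S - {0} \<and> b \<in> S - {0}}" using that by blast
      then show False using x unfolding min_generators_def by blast
    qed
    have "m \<le> x" using mp(3)[of x] xS unfolding m_def by force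
    show "x \<in> ({m .. 2*m-1} \<inter> S) \<union> (\<lambda>j. 2*m + j) ` JJ m A"
    proof (cases "x \<le> 2*m - 1")
      case True
      then show ?thesis using \<open>m \<le> x\<close> xS by auto
    next
      case False
      have "x \<noteq> 2 * m" using ns2[of m m] m0 by auto
      moreover have "\<not> 3 * m \<le> x"
      proof
        assume "3 * m \<le> x"
        then have "x - m \<in> S" using big_in[OF assms, of "x - m"] unfolding m_def by auto
        then show False using ns2[of m "x - m"] m0 \<open>3 * m \<le> x\<close> by auto
      qed
      ultimately have r: "2 * m < x" "x < 3 * m" using False by auto
      define j where "j = x - 2 * m"
      have j: "j \<in> {1..<m}" "x = 2 * m + j" using r unfolding j_def by auto
      have "j \<notin> A"
      proof
        assume "j \<in> A"
        then have "m + j \<in> S" unfolding A_def by auto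
        then show False using ns2[of m "m + j"] m0 j by auto
      qed
      moreover have "\<forall>a\<in>A. a < j \<longrightarrow> j - a \<notin> A"
      proof (intro ballI impI notI)
        fix a assume a: "a \<in> A" "a < j" "j - a \<in> A"
        then have "m + a \<in> S" "m + (j - a) \<in> S" unfolding A_def by auto
        then show False using ns2[of "m + a" "m + (j - a)"] m0 j a by auto
      qed
      ultimately have "j \<in> JJ m A" using j unfolding JJ_def by auto
      then show ?thesis using j by auto
    qed
  qed
  have "embdim S \<le> card (({m .. 2*m-1} \<inter> S) \<union> (\<lambda>j. 2*m + j) ` JJ m A)"
    unfolding embdim_def by (rule card_mono) (use sub finite_JJ in auto)
  also have "\<dots> \<le> card ({m .. 2*m-1} \<inter> S) + card ((\<lambda>j. 2*m + j) ` JJ m A)" by (rule card_Un_le)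
  also have "card ((\<lambda>j. 2*m + j) ` JJ m A) \<le> card (JJ m A)" by (rule card_image_le[OF finite_JJ])
  finally have "embdim S \<le> e1 S + ew (psi S)" unfolding e1_def ew_def ps m_def by simp
  then show ?thesis unfolding e2_def by linarith
qed

theorem proposition4p1:
  fixes g :: nat
  shows "(\<Sum>S\<in>B_set g. e2 S) \<le> 2 * int (fib (g + 1))"
proof -
  have "(\<Sum>S\<in>B_set g. e2 S) \<le> (\<Sum>S\<in>B_set g. int (ew (psi S)))"
    by (rule sum_mono) (rule e2_le)
  also have "\<dots> = (\<Sum>p\<in>psi ` B_set g. int (ew p))"
    by (rule sum.reindex[OF psi_inj, symmetric, unfolded comp_def])
  also have "\<dots> \<le> (\<Sum>p\<in>Fam g. int (ew p))"
    by (rule sum_mono2) (use finite_Fam psi_Fam in auto)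
  also have "\<dots> = int (SF g)" unfolding SF_def by simp
  also have "\<dots> \<le> 2 * int (fib (g + 1))" using SF_bound[of g] by linarith
  finally show ?thesis .
qed

end
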